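(* Let $u,v>0$ and $0<a,b\le 1$, and consider the map $(x,y)\mapsto\big((1-a)x+auy(1-y),\ (1-b)y+bvx(1-x)\big)$. Let $R_1=u^2v^2-4u^2v-4uv^2+18uv-27$. Provided $R_1\neq 0$: the map has three distinct positive equilibria if and only if $R_1>0$, and it has exactly one positive equilibrium if and only if $R_1<0$ and $uv>1$. Provided $R_1=0$: the map has two distinct positive equilibria if and only if $(u,v)\neq(3,3)$, and it has a unique positive equilibrium, namely $(2/3,2/3)$, if $(u,v)=(3,3)$.
   Context: An equilibrium of the map is a real fixed point $(x^*,y^* )$, i.e. a real solution of $x^*=uy^*(1-y^* )$, $y^*=vx^*(1-x^* )$; it is called positive if $x^*>0$ and $y^*>0$. *)

theory Defs
  imports Complex_Main
begin

definition cmap :: "real \<Rightarrow> real \<Rightarrow> real \<Rightarrow> real \<Rightarrow> real \<times> real \<Rightarrow> real \<times> real" where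
  "cmap a b u v p = (let x = fst p; y = snd p in
     ((1 - a) * x + a * u * y * (1 - y), (1 - b) * y + b * v * x * (1 - x)))"

definition pos_equilibria :: "real \<Rightarrow> real \<Rightarrow> real \<Rightarrow> real \<Rightarrow> (real \<times> real) set" where
  "pos_equilibria a b u v = {p. cmap a b u v p = p \<and> fst p > 0 \<and> snd p > 0}"

definition R1 :: "real \<Rightarrow> real \<Rightarrow> real" where
  "R1 u v = u^2 * v^2 - 4 * u^2 * v - 4 * u * v^2 + 18 * u * v - 27"

end

theory Submission imports Defs "HOL-Library.Quadratic_Discriminant" begin

definition gg :: "real \<Rightarrow> real \<Rightarrow> real" where "gg u y = (1-y)*(1-u*y+u*y^2)"

lemma quad_roots:
  fixes a b c :: real
  assumes "a \<noteq> 0"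
  shows "discrim a b c < 0 \<Longrightarrow> {x. a*x^2+b*x+c=0} = {}"
    and "discrim a b c = 0 \<Longrightarrow> {x. a*x^2+b*x+c=0} = {-b/(2*a)}"
    and "discrim a b c > 0 \<Longrightarrow> {x. a*x^2+b*x+c=0} = {(-b + sqrt (discrim a b c)) / (2 * a), (-b - sqrt (discrim a b c)) / (2 * a)}
        \<and> (-b + sqrt (discrim a b c)) / (2 * a) \<noteq> (-b - sqrt (discrim a b c)) / (2 * a)"
proof -
  show "discrim a b c < 0 \<Longrightarrow> {x. a*x^2+b*x+c=0} = {}"
    using discriminant_negative[OF assms] by auto
  show "discrim a b c = 0 \<Longrightarrow> {x. a*x^2+b*x+c=0} = {-b/(2*a)}"
    using discriminant_zero[OF assms] by auto
  assume d: "discrim a b c > 0"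
  have "{x. a*x^2+b*x+c=0} = {(-b + sqrt (discrim a b c)) / (2 * a), (-b - sqrt (discrim a b c)) / (2 * a)}"
    using discriminant_iff[OF assms] d by auto
  moreover have "(-b + sqrt (discrim a b c)) / (2 * a) \<noteq> (-b - sqrt (discrim a b c)) / (2 * a)"
    using d assms by (simp add: divide_cancel_right)
  ultimately show "{x. a*x^2+b*x+c=0} = {(-b + sqrt (discrim a b c)) / (2 * a), (-b - sqrt (discrim a b c)) / (2 * a)}
        \<and> (-b + sqrt (discrim a b c)) / (2 * a) \<noteq> (-b - sqrt (discrim a b c)) / (2 * a)" by blast
qed

lemma S_eq:
  assumes "a > 0" "b > 0"
  assumes "u>0" shows "pos_equilibria a b u v = (\<lambda>y. (u*y*(1-y), y)) ` {y. 0<y \<and> y<1 \<and> u*v*gg u y = 1}"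
proof (rule set_eqI)
  fix p :: "real \<times> real"
  obtain x y where p: "p = (x,y)" by force
  have fix_iff: "cmap a b u v (x,y) = (x,y) \<longleftrightarrow> x = u*y*(1-y) \<and> y = v*x*(1-x)"
  proof -
    have "cmap a b u v (x,y) = (x,y) \<longleftrightarrow> a*(u*y*(1-y) - x) = 0 \<and> b*(v*x*(1-x) - y) = 0"
      unfolding cmap_def Let_def by (auto simp: algebra_simps)
    also have "\<dots> \<longleftrightarrow> x = u*y*(1-y) \<and> y = v*x*(1-x)" using assms by auto
    finally show ?thesis .
  qed
  have "p \<in> pos_equilibria a b u v \<longleftrightarrow> x = u*y*(1-y) \<and> y = v*x*(1-x) \<and> x > 0 \<and> y > 0"
    unfolding pos_equilibria_def p using fix_iff by auto
  also have "\<dots> \<longleftrightarrow> x = u*y*(1-y) \<and> 0<y \<and> y<1 \<and> u*v*gg u y = 1" (is "?L \<longleftrightarrow> ?R")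
  proof
    assume L: ?L
    then have "x > 0" "y > 0" by blast+
    have y1: "y < 1"
    proof (rule ccontr)
      assume "\<not> y < 1"
      then have "u*y*(1-y) \<le> 0" using \<open>y>0\<close> \<open>0<u\<close>
        by (intro mult_nonneg_nonpos) auto
      moreover have "x = u*y*(1-y)" using L by blast
      ultimately show False using \<open>x>0\<close> by linarith
    qed
    have xe: "x = u*y*(1-y)" and ye: "y = v*x*(1-x)" using L by blast+
    have "y = v*(u*y*(1-y))*(1-u*y*(1-y))" using ye unfolding xe .
    also have "\<dots> = y * (u*v*gg u y)" unfolding gg_def by algebra
    finally have "u*v*gg u y = 1" using \<open>y>0\<close> by simp
    then show ?R using xe y1 \<open>y>0\<close> by blast
  next
    assume R: ?R
    have "y = y * (u*v*gg u y)" using R by simp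
    also have "\<dots> = v*(u*y*(1-y))*(1-u*y*(1-y))" unfolding gg_def by algebra
    then have "y = v*x*(1-x)" using R by simp
    moreover have "x > 0" using R \<open>0<u\<close> by simp
    ultimately show ?L using R by blast
  qed
  finally show "p \<in> pos_equilibria a b u v \<longleftrightarrow> p \<in> (\<lambda>y. (u*y*(1-y), y)) ` {y. 0<y \<and> y<1 \<and> u*v*gg u y = 1}"
    using p by auto
qed
lemma key_identity:
  fixes u v r :: real
  assumes "u*v*gg u r = 1"
  shows "u*(gg u r)^2 * R1 u v = (-3*u*r^2+4*u*r-4) * (3*u*r^2-4*u*r+u+1)^2"
proof -
  have "u*(gg u r)^2 * R1 u v = u*(u*v*gg u r)^2 - 4*u^2*gg u r*(u*v*gg u r) - 4*(u*v*gg u r)^2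
     + 18*u*gg u r*(u*v*gg u r) - 27*u*(gg u r)^2"
    unfolding R1_def by algebra
  also have "\<dots> = u - 4*u^2*gg u r - 4 + 18*u*gg u r - 27*u*(gg u r)^2" using assms by simp
  also have "\<dots> = (-3*u*r^2+4*u*r-4) * (3*u*r^2-4*u*r+u+1)^2" unfolding gg_def by algebra
  finally show ?thesis .
qed

lemma factor_identity:
  fixes u r y :: real
  shows "gg u r - gg u y = (y - r) * (u*y^2 + (u*(r-2))*y + (u*r^2-2*u*r+u+1))"
  unfolding gg_def by algebra

lemma small_uv:
  fixes u v :: real
  assumes "u>0" "v>0" "u*v \<le> 1"
  shows "{y. 0<y \<and> y<1 \<and> u*v*gg u y = 1} = {}" and "R1 u v < 0"
proof -
  { fix y assume y: "0<y" "y<1" "u*v*gg u y = 1"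
    have "gg u y < 1"
    proof (cases "1-u*y+u*y^2 \<le> 0")
      case True
      have "gg u y \<le> 0" unfolding gg_def using y True by (intro mult_nonneg_nonpos) auto
      then show ?thesis by simp
    next
      case False
      have "y^2 \<le> y" using y by (simp add: power2_eq_square mult_left_le)
      then have "u*y^2 \<le> u*y" using \<open>u>0\<close> by simp
      then have h1: "1-u*y+u*y^2 \<le> 1" by simp
      have "(1-y)*(1-u*y+u*y^2) \<le> 1-y" using h1 y by (intro mult_left_le) auto
      then have "(1-y)*(1-u*y+u*y^2) < 1" using y by linarith
      then show ?thesis unfolding gg_def by simp
    qed
    have False
    proof (cases "gg u y \<le> 0")
      case True
      then have "u*v*gg u y \<le> 0" using assms by (simp add: mult_nonneg_nonpos)
      then show False using y by simp
    next
      case False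
      then have "u*v*gg u y < 1 * 1" using \<open>gg u y < 1\<close> assms
        by (intro mult_le_less_imp_less) auto
      then show False using y by simp
    qed }
  then show "{y. 0<y \<and> y<1 \<and> u*v*gg u y = 1} = {}" by blast
  have "u*v > 0" using assms by simp
  have "R1 u v = (u*v)^2 + 18*(u*v) - 27 - 4*(u*v)*(u+v)" unfolding R1_def by algebra
  moreover have "(u*v)^2 \<le> 1" using assms \<open>u*v>0\<close> by (intro power_le_one) auto
  moreover have "4*(u*v)*(u+v) > 0" using assms by simp
  ultimately show "R1 u v < 0" using assms(3) by linarith
qed

lemma big_uv_roots:
  fixes u v :: real
  assumes "u>0" "v>0" "u*v > 1"
  shows "{y. 0<y \<and> y<1 \<and> u*v*gg u y = 1} = {y. u*v*gg u y = 1}"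
proof -
  { fix y assume y: "u*v*gg u y = 1"
    have "y > 0"
    proof (rule ccontr)
      assume "\<not> y > 0"
      then have "u*y \<le> 0" using assms by (intro mult_nonneg_nonpos) auto
      moreover have "u*y^2 \<ge> 0" using assms by simp
      ultimately have "1 - y \<ge> 1" "1-u*y+u*y^2 \<ge> 1" using \<open>\<not> y > 0\<close> by linarith+
      then have "gg u y \<ge> 1" unfolding gg_def
        using mult_mono[of 1 "1-y" 1 "1-u*y+u*y^2"] by simp
      then have "u*v*1 \<le> u*v*gg u y" using assms by (intro mult_left_mono) auto
      then show False using y assms(3) by simp
    qed
    have "y < 1"
    proof (rule ccontr)
      assume "\<not> y < 1"
      then have "u*y*(y-1) \<ge> 0" using assms \<open>y>0\<close> by (intro mult_nonneg_nonneg) auto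
      moreover have "u*y*(y-1) = u*y^2 - u*y" by (simp add: power2_eq_square algebra_simps)
      ultimately have "1 - y \<le> 0" "1-u*y+u*y^2 \<ge> 1" using \<open>\<not> y < 1\<close> by linarith+
      then have "gg u y \<le> 0" unfolding gg_def
        by (intro mult_nonpos_nonneg) auto
      then have "u*v*gg u y \<le> 0" using assms by (intro mult_nonneg_nonpos) auto
      then show False using y by simp
    qed
    note \<open>y>0\<close> \<open>y<1\<close> }
  then show ?thesis by blast
qed

lemma root_exists:
  fixes u v :: real
  assumes "u>0" "v>0" "u*v > 1"
  shows "\<exists>r. u*v*gg u r = 1"
proof -
  have "\<exists>r\<ge>0. r \<le> 1 \<and> u*v*gg u r = 1"
  proof (rule IVT2')
    show "u * v * gg u 1 \<le> 1" by (simp add: gg_def)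
    show "1 \<le> u * v * gg u 0" using assms by (simp add: gg_def)
    show "(0::real) \<le> 1" by simp
    show "continuous_on {0..1} (\<lambda>r. u * v * gg u r)" unfolding gg_def
      by (intro continuous_intros)
  qed
  then show ?thesis by blast
qed


lemma card_S:
  assumes "a > 0" "b > 0" "u > 0"
  shows "card (pos_equilibria a b u v) = card {y. 0<y \<and> y<1 \<and> u*v*gg u y = 1}"
  unfolding S_eq[OF assms] by (rule card_image) (auto simp: inj_on_def)

lemma three_three:
  fixes r :: real
  assumes "u*v*gg u r = 1" "u > 0"
  shows "(u = 3 \<and> v = 3) \<longleftrightarrow> (3*u*r^2-4*u*r+u+1 = 0 \<and> -3*u*r^2+4*u*r-4 = 0)"
proof
  assume uv: "u = 3 \<and> v = 3"
  have "(2-3*r)^3 = 9*gg 3 r - 1" unfolding gg_def by algebra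
  also have "\<dots> = 0" using assms uv by simp
  finally have "r = 2/3" by simp
  then show "3*u*r^2-4*u*r+u+1 = 0 \<and> -3*u*r^2+4*u*r-4 = 0" unfolding \<open>r = 2/3\<close> using uv by (simp add: power2_eq_square)
next
  assume h: "3*u*r^2-4*u*r+u+1 = 0 \<and> -3*u*r^2+4*u*r-4 = 0"
  then have u3: "u = 3" by linarith
  have h2: "-3*u*r^2+4*u*r-4 = 0" using h by blast
  have "-9*r^2+12*r-4 = 0" using h2 unfolding u3 by simp
  moreover have "(3*r-2)^2 = -(-9*r^2+12*r-4)" by algebra
  ultimately have "(3*r-2)^2 = 0" by simp
  then have r: "r = 2/3" by simp
  have "gg 3 (2/3) = 1/9" by (simp add: gg_def power2_eq_square)
  then have "u*v*gg u r = 3*v*(1/9)" unfolding u3 r by simp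
  then have "v = 3" using assms(1) by simp
  then show "u = 3 \<and> v = 3" using u3 by simp
qed

theorem theorem1:
  fixes u v a b :: real
  assumes "u > 0" "v > 0" "0 < a" "a \<le> 1" "0 < b" "b \<le> 1"
  shows "(R1 u v \<noteq> 0 \<longrightarrow>
            ((card (pos_equilibria a b u v) = 3 \<longleftrightarrow> R1 u v > 0) \<and>
             (card (pos_equilibria a b u v) = 1 \<longleftrightarrow> R1 u v < 0 \<and> u * v > 1))) \<and>
         (R1 u v = 0 \<longrightarrow>
            ((card (pos_equilibria a b u v) = 2 \<longleftrightarrow> (u, v) \<noteq> (3, 3)) \<and>
             ((u, v) = (3, 3) \<longrightarrow> pos_equilibria a b u v = {(2/3, 2/3)})))"
proof (cases "u*v \<le> 1")
  case True
  have "card (pos_equilibria a b u v) = 0"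
    using card_S[of a b u v] small_uv(1)[OF assms(1,2) True] assms by simp
  then show ?thesis using small_uv(2)[OF assms(1,2) True] True by simp
next
  case False
  then have uv1: "u*v > 1" by simp
  obtain r where r: "u*v*gg u r = 1" using root_exists[OF assms(1,2) uv1] by blast
  define Q where "Q y = u*y^2 + (u*(r-2))*y + (u*r^2-2*u*r+u+1)" for y
  define Dq where "Dq = -3*u*r^2+4*u*r-4"
  define Qr where "Qr = 3*u*r^2-4*u*r+u+1"
  define QZ where "QZ = {y. u*y^2 + (u*(r-2))*y + (u*r^2-2*u*r+u+1) = 0}"
  have QrQ: "Q r = Qr" unfolding Q_def Qr_def by (simp add: power2_eq_square algebra_simps)
  have disc: "discrim u (u*(r-2)) (u*r^2-2*u*r+u+1) = u * Dq"
    unfolding discrim_def Dq_def by (simp add: power2_eq_square algebra_simps)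
  have u0: "u \<noteq> 0" using assms by simp
  have Z: "{y. 0<y \<and> y<1 \<and> u*v*gg u y = 1} = insert r QZ"
  proof -
    have "u*v*gg u y = 1 \<longleftrightarrow> y = r \<or> y \<in> QZ" for y
    proof -
      have "u*v*gg u y = 1 \<longleftrightarrow> u*v*(gg u r - gg u y) = 0" using r by (auto simp: algebra_simps)
      also have "\<dots> \<longleftrightarrow> gg u r - gg u y = 0" using assms by simp
      also have "\<dots> \<longleftrightarrow> (y - r) * Q y = 0" unfolding factor_identity Q_def ..
      also have "\<dots> \<longleftrightarrow> y = r \<or> y \<in> QZ" unfolding QZ_def Q_def by simp
      finally show ?thesis .
    qed
    then show ?thesis unfolding big_uv_roots[OF assms(1,2) uv1] by auto
  qed
  have cardS: "card (pos_equilibria a b u v) = card (insert r QZ)"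
    using card_S[of a b u v] Z assms by simp
  have gpos: "u*(gg u r)^2 > 0"
  proof -
    have "gg u r \<noteq> 0" using r by auto
    then show ?thesis using assms by simp
  qed
  have key: "u*(gg u r)^2 * R1 u v = Dq * Qr^2"
    using key_identity[OF r] unfolding Dq_def Qr_def .
  have sgn_pos: "R1 u v > 0 \<longleftrightarrow> Dq > 0 \<and> Qr \<noteq> 0"
  proof -
    have "R1 u v > 0 \<longleftrightarrow> u*(gg u r)^2 * R1 u v > 0" using mult_less_cancel_left_pos[OF gpos, of 0 "R1 u v"] by simp
    also have "\<dots> \<longleftrightarrow> Dq > 0 \<and> Qr \<noteq> 0" unfolding key by (auto simp: zero_less_mult_iff)
    finally show ?thesis .
  qed
  have sgn_neg: "R1 u v < 0 \<longleftrightarrow> Dq < 0 \<and> Qr \<noteq> 0"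
  proof -
    have "R1 u v < 0 \<longleftrightarrow> u*(gg u r)^2 * R1 u v < 0" using mult_less_cancel_left_pos[OF gpos, of "R1 u v" 0] by simp
    also have "\<dots> \<longleftrightarrow> Dq < 0 \<and> Qr \<noteq> 0" unfolding key by (auto simp: mult_less_0_iff)
    finally show ?thesis .
  qed
  have sgn_zero: "R1 u v = 0 \<longleftrightarrow> Dq = 0 \<or> Qr = 0"
  proof -
    have "R1 u v = 0 \<longleftrightarrow> u*(gg u r)^2 * R1 u v = 0" using gpos by (metis less_irrefl mult_eq_0_iff)
    also have "\<dots> \<longleftrightarrow> Dq = 0 \<or> Qr = 0" unfolding key by simp
    finally show ?thesis .
  qed
  have finQZ: "finite QZ" and cardQZ: "card QZ = (if Dq > 0 then 2 else if Dq = 0 then 1 else 0)"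
  proof -
    have "finite QZ \<and> card QZ = (if Dq > 0 then 2 else if Dq = 0 then 1 else 0)"
    proof (cases "Dq > 0")
      case True
      then have "discrim u (u*(r-2)) (u*r^2-2*u*r+u+1) > 0" unfolding disc using assms by simp
      from quad_roots(3)[OF u0 this] True show ?thesis unfolding QZ_def by simp
    next
      case F: False
      show ?thesis
      proof (cases "Dq = 0")
        case True
        then have "discrim u (u*(r-2)) (u*r^2-2*u*r+u+1) = 0" unfolding disc by simp
        from quad_roots(2)[OF u0 this] True show ?thesis unfolding QZ_def by simp
      next
        case False
        then have "discrim u (u*(r-2)) (u*r^2-2*u*r+u+1) < 0" unfolding disc using assms F
          by (simp add: mult_pos_neg)
        from quad_roots(1)[OF u0 this] False F show ?thesis unfolding QZ_def by simp
      qed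
    qed
    then show "finite QZ" "card QZ = (if Dq > 0 then 2 else if Dq = 0 then 1 else 0)" by auto
  qed
  have rQZ: "r \<in> QZ \<longleftrightarrow> Qr = 0" using QrQ unfolding QZ_def Q_def by simp
  have t33: "(u = 3 \<and> v = 3) \<longleftrightarrow> (Qr = 0 \<and> Dq = 0)"
    using three_three[OF r assms(1)] unfolding Qr_def Dq_def .
  have cardZ: "card (insert r QZ) = (if Qr = 0 then card QZ else card QZ + 1)"
    using finQZ rQZ by (simp add: card_insert_if)
  have Dq_nonneg: "Qr = 0 \<Longrightarrow> Dq \<ge> 0"
    using rQZ cardQZ finQZ by (cases "Dq > 0"; cases "Dq = 0") auto
  show ?thesis
  proof (intro conjI impI)
    assume R: "R1 u v \<noteq> 0"
    then have "Qr \<noteq> 0" using sgn_zero by simp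
    show "card (pos_equilibria a b u v) = 3 \<longleftrightarrow> R1 u v > 0"
      unfolding cardS cardZ cardQZ sgn_pos using \<open>Qr \<noteq> 0\<close> by auto
    show "card (pos_equilibria a b u v) = 1 \<longleftrightarrow> R1 u v < 0 \<and> u*v > 1"
      unfolding cardS cardZ cardQZ sgn_neg using \<open>Qr \<noteq> 0\<close> uv1 by auto
  next
    assume R: "R1 u v = 0"
    show "card (pos_equilibria a b u v) = 2 \<longleftrightarrow> (u, v) \<noteq> (3, 3)"
      unfolding cardS cardZ cardQZ using R sgn_zero t33 Dq_nonneg by auto
  next
    assume uv: "(u, v) = (3, 3)"
    then have "Qr = 0" "Dq = 0" using t33 by auto
    have u3: "u = 3" and v3: "v = 3" using uv by auto
    have "QZ = {- (u*(r-2)) / (2*u)}"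
      unfolding QZ_def using quad_roots(2)[OF u0] disc \<open>Dq = 0\<close> by simp
    then have QZ1: "QZ = {r}" using rQZ \<open>Qr = 0\<close> by auto
    have "r = 2/3" using QZ1 \<open>QZ = {- (u*(r-2)) / (2*u)}\<close> u3 by auto
    then have "{y. 0<y \<and> y<1 \<and> u*v*gg u y = 1} = {2/3}" using Z QZ1 by simp
    then show "pos_equilibria a b u v = {(2/3, 2/3)}"
      unfolding S_eq[OF assms(3,5,1)] using u3 by simp
  qed
qed

end
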